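(* Let $G=(V,E)$ be a finite simple graph, $\omega\in\mathrm{Acyc}(G)$, and $P=P(G,[\omega])$ the associated toric poset with toric chamber $c(P)\subseteq\mathbb{R}^V/\mathbb{Z}^V$. Let $q\colon[0,1]^V\to\mathbb{R}^V/\mathbb{Z}^V$ be the restriction of the natural quotient map. Then the topological closure of $c(P)$ satisfies \[\overline{c(P)}=\bigcup_{\omega'\in[\omega]} q\big(\mathcal{O}(P(G,\omega'))\big).\]
   Context: $V=[n]$. $\mathrm{Acyc}(G)$ is the set of acyclic orientations of $G$; for $\omega\in\mathrm{Acyc}(G)$, $P(G,\omega)$ is the poset on $V$ obtained as the transitive (reflexive) closure of $\omega$. A flip converts a source of an acyclic orientation into a sink (reversing all edges incident to it); $\equiv$ is the equivalence relation on $\mathrm{Acyc}(G)$ generated by flips and $[\omega]$ denotes the class of $\omega$. With $q\colon\mathbb{R}^V\to\mathbb{R}^V/\mathbb{Z}^V$ the quotient map, the toric graphic arrangement $\mathcal{A}_{\mathrm{tor}}(G)$ consists of the toric hyperplanes $H^{\mathrm{tor}}_{ij}=\{x\in\mathbb{R}^V/\mathbb{Z}^V: x_i\equiv x_j \bmod 1\}$ for $\{i,j\}\in E$; its toric chambers are the connected components of the complement. For $x$ in the complement, let $\omega(x)$ orient each edge $\{i,j\}$ as $i\to j$ iff $x_i<x_j$ (coordinates taken as representatives in $[0,1)$); it is known that $x,x'$ lie in the same toric chamber iff $\omega(x)\equiv\omega(x')$, giving a bijection between toric chambers and $\mathrm{Acyc}(G)/\!\equiv$. The toric poset $P(G,[\omega])$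 is identified with the toric chamber $c(P)$ corresponding to $[\omega]$. The order polytope of a poset $Q$ on $V$ is $\mathcal{O}(Q)=\{x\in[0,1]^V: x_i\le x_j \text{ whenever } i\le_Q j\}$. *)

theory Defs
  imports "HOL-Analysis.Analysis"
begin

text \<open>Vertices: a finite type 'a (playing the role of V = [n]).
 An orientation is a set of ordered pairs (i,j), meaning the arc i -> j.\<close>

definition simple_graph :: "'a set set \<Rightarrow> bool" where
  "simple_graph E \<longleftrightarrow> (\<forall>e\<in>E. \<exists>i j. i \<noteq> j \<and> e = {i, j})"

definition is_orientation :: "'a set set \<Rightarrow> ('a \<times> 'a) set \<Rightarrow> bool" where
  "is_orientation E w \<longleftrightarrow>
     (\<forall>(i,j)\<in>w. {i,j} \<in> E) \<and>
     (\<forall>i j. {i,j} \<in> E \<longrightarrow> i \<noteq> j \<longrightarrow> ((i,j) \<in> w \<longleftrightarrow> (j,i) \<notin> w))"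

definition Acyc :: "'a set set \<Rightarrow> ('a \<times> 'a) set set" where
  "Acyc E = {w. is_orientation E w \<and> acyclic w}"

text \<open>P(G,w): the reflexive transitive closure of w, as a relation (i,j) means i <= j.\<close>
definition poset_of :: "('a \<times> 'a) set \<Rightarrow> ('a \<times> 'a) set" where
  "poset_of w = w\<^sup>*"

definition is_source :: "('a \<times> 'a) set \<Rightarrow> 'a \<Rightarrow> bool" where
  "is_source w v \<longleftrightarrow> (\<forall>u. (u, v) \<notin> w)"

definition flip_at :: "('a \<times> 'a) set \<Rightarrow> 'a \<Rightarrow> ('a \<times> 'a) set" where
  "flip_at w v = {(i,j) \<in> w. i \<noteq> v \<and> j \<noteq> v} \<union> {(j,i) | i j. (i,j) \<in> w \<and> (i = v \<or> j = v)}"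

definition flip_step :: "('a \<times> 'a) set \<Rightarrow> ('a \<times> 'a) set \<Rightarrow> bool" where
  "flip_step w w' \<longleftrightarrow> (\<exists>v. is_source w v \<and> w' = flip_at w v)"

definition flip_equiv :: "'a set set \<Rightarrow> ('a \<times> 'a) set \<Rightarrow> ('a \<times> 'a) set \<Rightarrow> bool" where
  "flip_equiv E w w' \<longleftrightarrow> w \<in> Acyc E \<and> w' \<in> Acyc E \<and>
     (\<lambda>a b. a \<in> Acyc E \<and> b \<in> Acyc E \<and> (flip_step a b \<or> flip_step b a))\<^sup>*\<^sup>* w w'"

definition flip_class :: "'a set set \<Rightarrow> ('a \<times> 'a) set \<Rightarrow> ('a \<times> 'a) set set" where
  "flip_class E w = {w'. flip_equiv E w w'}"

text \<open>The torus R^V / Z^V, represented by the canonical representatives in [0,1)^V;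
 the quotient map q takes fractional parts coordinatewise, and the torus carries
 the quotient topology induced by q.\<close>
definition tor_pts :: "('a \<Rightarrow> real) set" where
  "tor_pts = {y. \<forall>i. 0 \<le> y i \<and> y i < 1}"

definition tor_q :: "('a \<Rightarrow> real) \<Rightarrow> ('a \<Rightarrow> real)" where
  "tor_q x = (\<lambda>i. frac (x i))"

lemma istopology_tor: "istopology (\<lambda>U. U \<subseteq> tor_pts \<and> open (tor_q -` U))"
  unfolding istopology_def
  by (auto simp: vimage_Union intro!: open_Union)

definition tor_top :: "('a::finite \<Rightarrow> real) topology" where
  "tor_top = topology (\<lambda>U. U \<subseteq> tor_pts \<and> open (tor_q -` U))"

definition tor_hyperplane :: "'a \<Rightarrow> 'a \<Rightarrow> ('a \<Rightarrow> real) set" where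
  "tor_hyperplane i j = {y \<in> tor_pts. y i - y j \<in> \<int>}"

definition tor_complement :: "'a set set \<Rightarrow> ('a \<Rightarrow> real) set" where
  "tor_complement E = tor_pts - (\<Union>e\<in>E. \<Union>i\<in>e. \<Union>j\<in>e. if i \<noteq> j then tor_hyperplane i j else {})"

definition tor_orient :: "'a set set \<Rightarrow> ('a \<Rightarrow> real) \<Rightarrow> ('a \<times> 'a) set" where
  "tor_orient E x = {(i,j). {i,j} \<in> E \<and> x i < x j}"

definition toric_chamber :: "'a::finite set set \<Rightarrow> ('a \<times> 'a) set \<Rightarrow> ('a \<Rightarrow> real) set" where
  "toric_chamber E w =
     \<Union>{connected_component_of_set (subtopology tor_top (tor_complement E)) x | x.
          x \<in> tor_complement E \<and> tor_orient E x \<in> flip_class E w}"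

definition order_polytope :: "('a \<times> 'a) set \<Rightarrow> ('a \<Rightarrow> real) set" where
  "order_polytope Q = {x. (\<forall>i. 0 \<le> x i \<and> x i \<le> 1) \<and> (\<forall>(i,j)\<in>Q. x i \<le> x j)}"

end

theory Submission
  imports Defs
begin


lemma openin_tor: "openin tor_top U \<longleftrightarrow> U \<subseteq> tor_pts \<and> open (tor_q -` U)"
  by (simp add: tor_top_def istopology_tor)

lemma tor_q_in: "tor_q x \<in> tor_pts"
  by (simp add: tor_q_def tor_pts_def frac_lt_1)

lemma topspace_tor: "topspace (tor_top::('a::finite \<Rightarrow> real) topology) = tor_pts"
proof -
  have "openin tor_top (tor_pts::('a \<Rightarrow> real) set)"
  proof -
    have "tor_q -` (tor_pts::('a \<Rightarrow> real) set) = UNIV" using tor_q_in by blast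
    then show ?thesis unfolding openin_tor by simp
  qed
  then show ?thesis using openin_subset[of tor_top] openin_tor
    by (metis openin_topspace subset_antisym)
qed

lemma tor_q_id: "x \<in> tor_pts \<Longrightarrow> tor_q x = x"
  by (auto simp: tor_q_def tor_pts_def frac_eq)

lemma frac_eq_iff: "frac (a::real) = frac b \<longleftrightarrow> a - b \<in> \<int>"
proof
  assume "frac a = frac b"
  then have "a - b = of_int (\<lfloor>a\<rfloor> - \<lfloor>b\<rfloor>)" by (simp add: frac_def)
  then show "a - b \<in> \<int>" by simp
next
  assume "a - b \<in> \<int>"
  then obtain n where "a - b = of_int n" by (auto elim: Ints_cases)
  then have "a = b + of_int n" by simp
  then show "frac a = frac b" by (simp add: frac_def)
qed

lemma tor_q_eq: "tor_q x = tor_q k \<longleftrightarrow> (\<forall>i. x i - k i \<in> \<int>)"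
  by (auto simp: tor_q_def fun_eq_iff frac_eq_iff)

lemma cont_shift: "continuous_on UNIV (\<lambda>x::'a\<Rightarrow>real. \<lambda>i. x i - z i)"
  by (intro continuous_on_coordinatewise_then_product continuous_intros) auto

lemma open_vim: "continuous_on UNIV f \<Longrightarrow> open B \<Longrightarrow> open (f -` B)"
  using continuous_on_open_vimage[OF open_UNIV] by auto

lemma closed_vim: "continuous_on UNIV f \<Longrightarrow> closed B \<Longrightarrow> closed (f -` B)"
  using continuous_on_closed_vimage[OF closed_UNIV] by auto

lemma preim_img: "tor_q -` (tor_q ` B) = (\<Union>z\<in>{z. \<forall>i. z i \<in> \<int>}. (\<lambda>x. \<lambda>i. x i - z i) -` B)"
proof (rule set_eqI, rule iffI)
  fix x assume "x \<in> tor_q -` tor_q ` B"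
  then obtain b where b: "b \<in> B" "tor_q x = tor_q b" by auto
  then have m: "(\<lambda>i. x i - b i) \<in> {z. \<forall>i. z i \<in> \<int>}" by (simp add: tor_q_eq)
  show "x \<in> (\<Union>z\<in>{z. \<forall>i. z i \<in> \<int>}. (\<lambda>x. \<lambda>i. x i - z i) -` B)"
    by (rule UN_I[OF m]) (simp add: b(1))
next
  fix x assume "x \<in> (\<Union>z\<in>{z. \<forall>i. z i \<in> \<int>}. (\<lambda>x. \<lambda>i. x i - z i) -` B)"
  then obtain z where z: "\<forall>i. z i \<in> \<int>" "(\<lambda>i. x i - z i) \<in> B" by auto
  have "tor_q x = tor_q (\<lambda>i. x i - z i)" using z by (simp add: tor_q_eq)
  then show "x \<in> tor_q -` tor_q ` B" using z by auto
qed

lemma open_preim_img: "open B \<Longrightarrow> open (tor_q -` (tor_q ` B))"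
  unfolding preim_img by (intro open_UN ballI open_vim cont_shift)

lemma openin_img: "open B \<Longrightarrow> openin tor_top (tor_q ` B)"
  using open_preim_img tor_q_in by (auto simp: openin_tor)

lemma open_box: "open {u::'a::finite\<Rightarrow>real. \<forall>i. \<bar>u i - y i\<bar> < d}"
proof -
  have eq: "{u::'a\<Rightarrow>real. \<forall>i. \<bar>u i - y i\<bar> < d} = (\<Inter>i\<in>UNIV. (\<lambda>u. u i) -` {r. \<bar>r - y i\<bar> < d})"
    by auto
  have o: "open {r::real. \<bar>r - y i\<bar> < d}" for i
    using open_ball[of "y i" d] by (simp add: ball_def dist_real_def abs_minus_commute)
  have "open ((\<lambda>u. u i) -` {r::real. \<bar>r - y i\<bar> < d})" for i
    by (rule open_vim[OF _ o]) simp
  then show ?thesis unfolding eq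
    using open_INT[OF finite_class.finite_UNIV, of "\<lambda>i. (\<lambda>u. u i) -` {r::real. \<bar>r - y i\<bar> < d}"] by blast
qed

lemma closed_preim_img:
  assumes K: "closed K" and bd: "\<And>k i. k \<in> K \<Longrightarrow> \<bar>k i\<bar> \<le> 1"
  shows "closed (tor_q -` (tor_q ` (K::('a::finite \<Rightarrow> real) set)))"
proof -
  let ?P = "tor_q -` (tor_q ` K)"
  have "open (- ?P)"
  proof (rule open_subopen[THEN iffD2], rule ballI)
    fix x assume x: "x \<in> - ?P"
    define S where "S = (\<Sum>i\<in>UNIV. \<bar>x i\<bar>)"
    define M where "M = \<lceil>S\<rceil> + 3"
    define G where "G = (UNIV::'a set) \<rightarrow>\<^sub>E {-M..M}"
    define Z0 where "Z0 = (\<lambda>g i. real_of_int (g i)) ` G"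
    define T where "T = (\<Union>z\<in>Z0. (\<lambda>x. \<lambda>i. x i - z i) -` K)"
    have "finite G" unfolding G_def by (intro finite_PiE) auto
    then have "finite Z0" unfolding Z0_def by (rule finite_imageI)
    then have cT: "closed T" unfolding T_def
      by (intro closed_UN ballI closed_vim cont_shift K)
    have Z0int: "Z0 \<subseteq> {z. \<forall>i. z i \<in> \<int>}" unfolding Z0_def by auto
    have TP: "T \<subseteq> ?P" unfolding preim_img T_def
      by (rule UN_mono[OF Z0int]) simp
    define Nb where "Nb = {u. \<forall>i. \<bar>u i - x i\<bar> < 1} - T"
    have "open Nb" unfolding Nb_def using open_box cT by (rule open_Diff)
    moreover have "x \<in> Nb" using x TP unfolding Nb_def by auto
    moreover have "Nb \<subseteq> - ?P"
    proof
      fix v assume v: "v \<in> Nb"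
      show "v \<in> - ?P"
      proof
        assume "v \<in> ?P"
        then obtain z where z: "\<forall>i. z i \<in> \<int>" "(\<lambda>i. v i - z i) \<in> K"
          unfolding preim_img by auto
        define g where "g = (\<lambda>i. \<lfloor>z i\<rfloor>)"
        have zg: "z i = real_of_int (g i)" for i using z(1) unfolding g_def
          by (metis Ints_cases floor_of_int)
        have gb: "-M \<le> g i \<and> g i \<le> M" for i
        proof -
          have "\<bar>v i - z i\<bar> \<le> 1" using bd[OF z(2)] by simp
          moreover have "\<bar>v i - x i\<bar> < 1" using v unfolding Nb_def by auto
          moreover have "\<bar>x i\<bar> \<le> S" unfolding S_def
            by (rule member_le_sum) auto
          moreover have "S \<le> real_of_int \<lceil>S\<rceil>" by (rule le_of_int_ceiling)
          moreover have "\<bar>z i\<bar> = real_of_int \<bar>g i\<bar>" by (simp add: zg)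
          ultimately have "real_of_int \<bar>g i\<bar> \<le> real_of_int (\<lceil>S\<rceil> + 2)" by linarith
          then have "\<bar>g i\<bar> \<le> \<lceil>S\<rceil> + 2" by (simp only: of_int_le_iff)
          then show ?thesis unfolding M_def by linarith
        qed
        have gG: "g \<in> G" unfolding G_def PiE_UNIV_domain Pi_def using gb by simp
        have zeq: "z = (\<lambda>i. real_of_int (g i))" using zg by (simp add: fun_eq_iff)
        have zZ0: "z \<in> Z0" unfolding Z0_def using zeq gG by (rule image_eqI)
        have "v \<in> T" unfolding T_def by (rule UN_I[OF zZ0]) (simp add: z(2))
        then show False using v unfolding Nb_def by auto
      qed
    qed
    ultimately show "\<exists>T. open T \<and> x \<in> T \<and> T \<subseteq> - ?P" by blast
  qed
  then show ?thesis by (simp add: closed_def)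
qed

lemma closed_order_polytope: "closed (order_polytope Q :: ('a::finite \<Rightarrow> real) set)"
proof -
  have eq: "order_polytope Q = {x. \<forall>i. 0 \<le> x i} \<inter> {x. \<forall>i. x i \<le> 1} \<inter> {x. \<forall>p. p \<in> Q \<longrightarrow> x (fst p) \<le> x (snd p)}"
    unfolding order_polytope_def by (auto simp: split_def)
  have c1: "closed {x::'a\<Rightarrow>real. \<forall>i. 0 \<le> x i}" "closed {x::'a\<Rightarrow>real. \<forall>i. x i \<le> 1}"
    by (intro closed_Collect_all closed_Collect_le continuous_intros continuous_on_product_coordinates)+
  have c2: "closed {x::'a\<Rightarrow>real. \<forall>p. p \<in> Q \<longrightarrow> x (fst p) \<le> x (snd p)}"
  proof (rule closed_Collect_all)
    fix p show "closed {x::'a\<Rightarrow>real. p \<in> Q \<longrightarrow> x (fst p) \<le> x (snd p)}"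
      by (cases "p \<in> Q") (simp_all add: closed_Collect_le continuous_on_product_coordinates)
  qed
  show ?thesis unfolding eq by (intro closed_Int c1 c2)
qed



lemma height_acyclic:
  assumes "\<And>i j. (i,j) \<in> r \<Longrightarrow> f i < (f j::real)"
  shows "acyclic r"
proof -
  have "(a,b) \<in> r\<^sup>+ \<Longrightarrow> f a < f b" for a b
  proof (induction rule: trancl_induct)
    case (base y) then show ?case using assms by blast
  next
    case (step y z) then show ?case using assms[of y z] by linarith
  qed
  then show ?thesis unfolding acyclic_def by blast
qed

lemma acyclic_height:
  fixes r :: "('a::finite \<times> 'a) set"
  assumes "acyclic r"
  shows "\<exists>f. (\<forall>i j. (i,j) \<in> r \<longrightarrow> f i < (f j::real)) \<and> (\<forall>i. 0 \<le> f i \<and> f i < 1)"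
proof -
  define A where "A i = {j. (j,i) \<in> r\<^sup>+}" for i
  define N where "N = real (card (UNIV::'a set)) + 1"
  define f where "f i = real (card (A i)) / N" for i
  have Npos: "N > 0" unfolding N_def by simp
  have lt: "f i < f j" if "(i,j) \<in> r" for i j
  proof -
    have "A i \<subseteq> A j" unfolding A_def using that by (auto intro: trancl_into_trancl)
    moreover have "i \<in> A j" unfolding A_def using that by auto
    moreover have "i \<notin> A i" unfolding A_def using assms by (auto simp: acyclic_def)
    ultimately have "A i \<subset> A j" by blast
    then have "card (A i) < card (A j)" by (rule psubset_card_mono[OF finite])
    then show ?thesis unfolding f_def using Npos by (simp add: divide_strict_right_mono)
  qed
  have bd: "0 \<le> f i \<and> f i < 1" for i
  proof -
    have "card (A i) \<le> card (UNIV::'a set)" by (rule card_mono) auto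
    then have "real (card (A i)) < N" unfolding N_def by simp
    then show ?thesis unfolding f_def using Npos by simp
  qed
  show ?thesis using lt bd by blast
qed

lemma flip_mem: "(a,b) \<in> flip_at w v \<longleftrightarrow> ((a,b)\<in>w \<and> a\<noteq>v \<and> b\<noteq>v) \<or> ((b,a)\<in>w \<and> (b = v \<or> a = v))"
  unfolding flip_at_def by blast

lemma flip_at_Acyc:
  fixes w :: "('a::finite \<times> 'a) set"
  assumes w: "w \<in> Acyc E" and src: "is_source w v"
  shows "flip_at w v \<in> Acyc E"
proof -
  have ori: "is_orientation E w" and ac: "acyclic w" using w by (auto simp: Acyc_def)
  have o1: "\<forall>(i,j)\<in>w. {i,j} \<in> E" and
     o2: "\<And>i j. {i,j} \<in> E \<Longrightarrow> i \<noteq> j \<Longrightarrow> ((i,j) \<in> w \<longleftrightarrow> (j,i) \<notin> w)"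
    using ori unfolding is_orientation_def by blast+
  have "is_orientation E (flip_at w v)"
    unfolding is_orientation_def
  proof (intro conjI allI impI ballI)
    fix p assume "p \<in> flip_at w v"
    then obtain a b where p: "p = (a,b)" "(a,b) \<in> flip_at w v" by (cases p) auto
    then have "(a,b) \<in> w \<or> (b,a) \<in> w" unfolding flip_mem by blast
    then have "{a,b} \<in> E" using o1 by (auto simp: insert_commute)
    then show "case p of (i,j) \<Rightarrow> {i,j} \<in> E" using p by simp
  next
    fix i j assume e: "{i,j} \<in> E" "i \<noteq> j"
    have e': "{j,i} \<in> E" using e by (simp add: insert_commute)
    show "(i,j) \<in> flip_at w v \<longleftrightarrow> (j,i) \<notin> flip_at w v"
      unfolding flip_mem using o2[OF e] o2[OF e'] e(2) by blast
  qed
  moreover have "acyclic (flip_at w v)"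
  proof -
    obtain f where f: "\<And>i j. (i,j) \<in> w \<Longrightarrow> f i < (f j::real)" "\<And>i. 0 \<le> f i \<and> f i < 1"
      using acyclic_height[OF ac] by blast
    define g where "g = f(v := 1)"
    show ?thesis
    proof (rule height_acyclic[of _ g])
      fix i j assume "(i,j) \<in> flip_at w v"
      then consider "(i,j) \<in> w" "i \<noteq> v" "j \<noteq> v" | "(j,i) \<in> w" "j = v \<or> i = v"
        unfolding flip_at_def by blast
      then show "g i < g j"
      proof cases
        case 1 then show ?thesis using f(1)[of i j] by (simp add: g_def)
      next
        case 2
        then have "j = v" using src unfolding is_source_def by blast
        moreover have "i \<noteq> v" using 2 f(1)[of j i] \<open>j = v\<close> by auto
        ultimately show ?thesis using f(2)[of i] by (simp add: g_def)
      qed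
    qed
  qed
  ultimately show ?thesis by (simp add: Acyc_def)
qed

definition flipW :: "('a \<times> 'a) set \<Rightarrow> 'a set \<Rightarrow> ('a \<times> 'a) set" where
  "flipW w W = {(i,j) \<in> w. i \<notin> W \<and> j \<notin> W} \<union> {(j,i) | i j. (i,j) \<in> w \<and> (i \<in> W \<or> j \<in> W)}"

abbreviation fstep where
  "fstep E \<equiv> (\<lambda>a b. a \<in> Acyc E \<and> b \<in> Acyc E \<and> (flip_step a b \<or> flip_step b a))"

lemma flipW_equiv:
  fixes w :: "('a::finite \<times> 'a) set"
  assumes "finite W" "w \<in> Acyc E" "\<forall>v\<in>W. is_source w v" "\<forall>i\<in>W. \<forall>j\<in>W. (i,j) \<notin> w"
  shows "flipW w W \<in> Acyc E \<and> (fstep E)\<^sup>*\<^sup>* w (flipW w W)"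
  using assms
proof (induction W rule: finite_induct)
  case empty
  have "flipW w {} = w" unfolding flipW_def by auto
  then show ?case using empty by simp
next
  case (insert v W)
  let ?w1 = "flipW w W"
  have IH: "?w1 \<in> Acyc E" "(fstep E)\<^sup>*\<^sup>* w ?w1" using insert by auto
  have src: "is_source ?w1 v"
    using insert.prems insert.hyps(2) unfolding is_source_def flipW_def by auto
  have eq: "flip_at ?w1 v = flipW w (insert v W)"
    using insert.prems insert.hyps(2) unfolding flip_at_def flipW_def is_source_def
    by blast
  have A: "flip_at ?w1 v \<in> Acyc E" by (rule flip_at_Acyc[OF IH(1) src])
  have "fstep E ?w1 (flip_at ?w1 v)" using IH(1) A src by (auto simp: flip_step_def)
  then have "(fstep E)\<^sup>*\<^sup>* w (flip_at ?w1 v)" using IH(2) by (rule rtranclp.rtrancl_into_rtrancl[rotated])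
  then show ?case using A eq by simp
qed

lemma fstep_sym: "(fstep E)\<^sup>*\<^sup>* a b \<Longrightarrow> (fstep E)\<^sup>*\<^sup>* b a"
proof -
  have "symp (fstep E)" by (auto simp: symp_def)
  then have "symp ((fstep E)\<^sup>*\<^sup>*)" by (rule symp_rtranclp)
  then show "(fstep E)\<^sup>*\<^sup>* a b \<Longrightarrow> (fstep E)\<^sup>*\<^sup>* b a" by (auto simp: symp_def)
qed

lemma flip_equiv_sym: "flip_equiv E a b \<Longrightarrow> flip_equiv E b a"
  unfolding flip_equiv_def using fstep_sym by blast

lemma flip_equiv_trans: "flip_equiv E a b \<Longrightarrow> flip_equiv E b c \<Longrightarrow> flip_equiv E a c"
  unfolding flip_equiv_def by (blast intro: rtranclp_trans)



lemma int_diff_01: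
  assumes "0 \<le> (a::real)" "a < 1" "0 \<le> b" "b < 1"
  shows "a - b \<in> \<int> \<longleftrightarrow> a = b"
proof
  assume "a - b \<in> \<int>"
  then obtain n where n: "a - b = of_int n" by (auto elim: Ints_cases)
  have "\<bar>of_int n :: real\<bar> < 1" using n assms by linarith
  then have "n = 0" by linarith
  then show "a = b" using n by simp
qed simp

lemma compl_iff:
  assumes sg: "simple_graph E"
  shows "y \<in> tor_complement E \<longleftrightarrow> y \<in> tor_pts \<and> (\<forall>i j. {i,j} \<in> E \<longrightarrow> i \<noteq> j \<longrightarrow> y i \<noteq> y j)"
proof -
  have mem: "y \<in> (\<Union>e\<in>E. \<Union>i\<in>e. \<Union>j\<in>e. if i \<noteq> j then tor_hyperplane i j else {}) \<longleftrightarrow>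
     (\<exists>e\<in>E. \<exists>i\<in>e. \<exists>j\<in>e. i \<noteq> j \<and> y \<in> tor_hyperplane i j)"
    by (auto split: if_splits)
  show ?thesis
  proof (cases "y \<in> tor_pts")
    case False then show ?thesis unfolding tor_complement_def by auto
  next
    case True
    then have y01: "0 \<le> y i \<and> y i < 1" for i unfolding tor_pts_def by auto
    have hyp: "y \<in> tor_hyperplane i j \<longleftrightarrow> y i = y j" for i j
      unfolding tor_hyperplane_def using True int_diff_01[of "y i" "y j"] y01[of i] y01[of j] by auto
    have "(\<exists>e\<in>E. \<exists>i\<in>e. \<exists>j\<in>e. i \<noteq> j \<and> y i = y j) \<longleftrightarrow> (\<exists>i j. {i,j} \<in> E \<and> i \<noteq> j \<and> y i = y j)"
    proof
      assume "\<exists>e\<in>E. \<exists>i\<in>e. \<exists>j\<in>e. i \<noteq> j \<and> y i = y j"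
      then obtain e i j where e: "e \<in> E" "i \<in> e" "j \<in> e" "i \<noteq> j" "y i = y j" by blast
      obtain a b where "e = {a,b}" using sg e(1) unfolding simple_graph_def by blast
      then have "e = {i,j}" using e by auto
      then show "\<exists>i j. {i,j} \<in> E \<and> i \<noteq> j \<and> y i = y j" using e by blast
    next
      assume "\<exists>i j. {i,j} \<in> E \<and> i \<noteq> j \<and> y i = y j"
      then show "\<exists>e\<in>E. \<exists>i\<in>e. \<exists>j\<in>e. i \<noteq> j \<and> y i = y j" by blast
    qed
    then show ?thesis unfolding tor_complement_def using True mem hyp by auto
  qed
qed

lemma sg_neq: "simple_graph E \<Longrightarrow> {a,b} \<in> E \<Longrightarrow> a \<noteq> b"
  unfolding simple_graph_def by (metis doubleton_eq_iff insert_absorb2)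

lemma orient_Acyc:
  assumes sg: "simple_graph E" and y: "y \<in> tor_complement E"
  shows "tor_orient E y \<in> Acyc E"
proof -
  have ne: "\<And>i j. {i,j} \<in> E \<Longrightarrow> i \<noteq> j \<Longrightarrow> y i \<noteq> y j" using y compl_iff[OF sg] by blast
  have "is_orientation E (tor_orient E y)"
    unfolding is_orientation_def tor_orient_def
  proof (intro conjI allI impI ballI)
    fix p assume "p \<in> {(i, j). {i, j} \<in> E \<and> y i < y j}"
    then show "case p of (i, j) \<Rightarrow> {i, j} \<in> E" by auto
  next
    fix i j assume e: "{i,j} \<in> E" "i \<noteq> j"
    have e': "{j,i} \<in> E" using e by (simp add: insert_commute)
    show "((i, j) \<in> {(i, j). {i, j} \<in> E \<and> y i < y j}) = ((j, i) \<notin> {(i, j). {i, j} \<in> E \<and> y i < y j})"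
      using ne[OF e] e e' by auto
  qed
  moreover have "acyclic (tor_orient E y)"
    by (rule height_acyclic[of _ y]) (auto simp: tor_orient_def)
  ultimately show ?thesis by (simp add: Acyc_def)
qed

lemma poly_mem:
  assumes "y \<in> tor_pts"
  shows "y \<in> order_polytope (poset_of (tor_orient E y))"
proof -
  have "(i,j) \<in> (tor_orient E y)\<^sup>* \<Longrightarrow> y i \<le> y j" for i j
    by (induction rule: rtrancl_induct) (auto simp: tor_orient_def)
  then show ?thesis using assms unfolding order_polytope_def poset_of_def tor_pts_def
    by (auto simp: less_imp_le)
qed



lemma local_equiv:
  fixes E :: "'a::finite set set"
  assumes sg: "simple_graph E" and y: "y \<in> tor_complement E"
  shows "\<exists>U. openin tor_top U \<and> y \<in> U \<and>
           (\<forall>y'\<in>U \<inter> tor_complement E. flip_equiv E (tor_orient E y) (tor_orient E y'))"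
proof -
  have yp: "y \<in> tor_pts" and ne: "\<And>i j. {i,j} \<in> E \<Longrightarrow> i \<noteq> j \<Longrightarrow> y i \<noteq> y j"
    using y compl_iff[OF sg] by blast+
  have y01: "0 \<le> y i \<and> y i < 1" for i using yp unfolding tor_pts_def by auto
  define D where "D = (\<lambda>(i,j). y j - y i) ` {(i,j). y i < y j} \<union> range (\<lambda>i. 1 - y i) \<union> y ` {i. 0 < y i}"
  have fD: "finite D" unfolding D_def by simp
  have neD: "D \<noteq> {}" unfolding D_def by auto
  have posD: "\<forall>x\<in>D. 0 < x" unfolding D_def using y01 by auto
  define d where "d = Min D / 3"
  have mpos: "0 < Min D" using Min_gr_iff[OF fD neD] posD by blast
  have dpos: "0 < d" unfolding d_def using mpos by simp
  have dD: "2 * d < x" if "x \<in> D" for x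
  proof -
    have "Min D \<le> x" by (rule Min_le[OF fD that])
    then show ?thesis unfolding d_def using mpos by linarith
  qed
  have ga: "2 * d < y j - y i" if "y i < y j" for i j
  proof -
    have "y j - y i \<in> (\<lambda>(i,j). y j - y i) ` {(i,j). y i < y j}"
      using that by (intro image_eqI[where x="(i,j)"]) auto
    then show ?thesis using dD unfolding D_def by blast
  qed
  have gb: "2 * d < 1 - y i" for i
    using dD[of "1 - y i"] unfolding D_def by auto
  have gc: "2 * d < y i" if "0 < y i" for i
    using dD[of "y i"] that unfolding D_def by auto
  define B where "B = {u::'a\<Rightarrow>real. \<forall>i. \<bar>u i - y i\<bar> < d}"
  define U where "U = tor_q ` B"
  have "openin tor_top U" unfolding U_def B_def by (rule openin_img[OF open_box])
  moreover have "y \<in> U" unfolding U_def B_def using tor_q_id[OF yp] dpos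
    by (auto intro: image_eqI[of y tor_q y])
  moreover have "flip_equiv E (tor_orient E y) (tor_orient E y')"
    if y': "y' \<in> U \<inter> tor_complement E" for y'
  proof -
    obtain u where u: "u \<in> B" "y' = tor_q u" using y' unfolding U_def by auto
    have ub: "\<bar>u i - y i\<bar> < d" for i using u(1) unfolding B_def by auto
    define W where "W = {i. y i = 0 \<and> u i < 0}"
    have nW: "y' i = u i" if "i \<notin> W" for i
    proof -
      have "0 \<le> u i \<and> u i < 1"
      proof (cases "y i = 0")
        case True then show ?thesis using that ub[of i] gb[of i] unfolding W_def by auto
      next
        case False then have "0 < y i" using y01[of i] by simp
        then show ?thesis using ub[of i] gb[of i] gc[of i] by auto
      qed
      then show ?thesis using u(2) by (simp add: tor_q_def frac_eq)
    qed
    have inW: "y' i = u i + 1" if "i \<in> W" for i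
    proof -
      have "frac (u i) = frac (u i + 1)" by (simp add: frac_eq_iff)
      moreover have "0 \<le> u i + 1 \<and> u i + 1 < 1" using that ub[of i] gb[of i] y01[of i] unfolding W_def by auto
      ultimately show ?thesis using u(2) by (simp add: tor_q_def frac_eq)
    qed
    have W0: "y i = 0" "-d < u i" if "i \<in> W" for i using that ub[of i] unfolding W_def by auto
    let ?w = "tor_orient E y"
    have wA: "?w \<in> Acyc E" by (rule orient_Acyc[OF sg y])
    have y'C: "y' \<in> tor_complement E" using y' by blast
    have wA': "tor_orient E y' \<in> Acyc E" by (rule orient_Acyc[OF sg y'C])
    have srcs: "\<forall>v\<in>W. is_source ?w v"
      unfolding is_source_def
    proof (intro ballI allI)
      fix v x assume v: "v \<in> W"
      show "(x,v) \<notin> ?w" using W0(1)[OF v] y01[of x] by (auto simp: tor_orient_def)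
    qed
    have indep: "\<forall>i\<in>W. \<forall>j\<in>W. (i,j) \<notin> ?w"
    proof (intro ballI)
      fix i j assume "i \<in> W" "j \<in> W"
      then show "(i,j) \<notin> ?w" using W0(1) by (auto simp: tor_orient_def)
    qed
    have eq: "tor_orient E y' = flipW ?w W"
    proof (rule set_eqI)
      fix p :: "'a \<times> 'a"
      obtain a b where p: "p = (a,b)" by (cases p)
      have fm: "(a,b) \<in> flipW ?w W \<longleftrightarrow>
          ({a,b} \<in> E \<and> y a < y b \<and> a \<notin> W \<and> b \<notin> W) \<or> ({b,a} \<in> E \<and> y b < y a \<and> (b \<in> W \<or> a \<in> W))"
        unfolding flipW_def tor_orient_def by blast
      have "(a,b) \<in> tor_orient E y' \<longleftrightarrow> (a,b) \<in> flipW ?w W"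
      proof (cases "{a,b} \<in> E")
        case False
        then have "{b,a} \<notin> E" by (simp add: insert_commute)
        then show ?thesis unfolding fm using False by (simp add: tor_orient_def)
      next
        case True
        have ab: "a \<noteq> b" by (rule sg_neq[OF sg True])
        have yab: "y a \<noteq> y b" by (rule ne[OF True ab])
        have ba: "{b,a} \<in> E" using True by (simp add: insert_commute)
        have lhs: "(a,b) \<in> tor_orient E y' \<longleftrightarrow> y' a < y' b" using True by (simp add: tor_orient_def)
        show ?thesis
        proof (cases "a \<in> W"; cases "b \<in> W")
          assume "a \<in> W" "b \<in> W"
          then show ?thesis using W0 yab by auto
        next
          assume a: "a \<in> W" and b: "b \<notin> W"
          have "y' b < y' a" using inW[OF a] nW[OF b] W0[OF a] ub[of b] gb[of b] by linarith
          moreover have "\<not> y b < y a" using W0[OF a] y01[of b] by linarith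
          ultimately show ?thesis unfolding lhs fm using a b by auto
        next
          assume a: "a \<notin> W" and b: "b \<in> W"
          have "y' a < y' b" using inW[OF b] nW[OF a] W0[OF b] ub[of a] gb[of a] by linarith
          moreover have "y b < y a" using W0[OF b] y01[of a] yab by linarith
          ultimately show ?thesis unfolding lhs fm using a b ba by auto
        next
          assume a: "a \<notin> W" and b: "b \<notin> W"
          have "y' a < y' b \<longleftrightarrow> y a < y b"
          proof (cases "y a < y b")
            case True then show ?thesis using ga[OF True] nW[OF a] nW[OF b] ub[of a] ub[of b] by linarith
          next
            case False then have "y b < y a" using yab by linarith
            then show ?thesis using ga[of b a] nW[OF a] nW[OF b] ub[of a] ub[of b] by linarith
          qed
          then show ?thesis unfolding lhs fm using a b True by auto
        qed
      qed
      then show "p \<in> tor_orient E y' \<longleftrightarrow> p \<in> flipW ?w W" using p by simp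
    qed
    have "(fstep E)\<^sup>*\<^sup>* ?w (flipW ?w W)"
      using flipW_equiv[OF finite wA srcs indep] by blast
    then show ?thesis unfolding flip_equiv_def eq using wA wA' eq by simp
  qed
  ultimately show ?thesis by blast
qed



theorem mainTheorem2:
  fixes E :: "'a::finite set set" and w :: "('a \<times> 'a) set"
  assumes "simple_graph E" and "w \<in> Acyc E"
  shows "tor_top closure_of (toric_chamber E w) =
         (\<Union>w'\<in>flip_class E w. tor_q ` order_polytope (poset_of w'))"
proof -
  note sg = assms(1)
  define C where "C = tor_complement E"
  define X where "X = subtopology tor_top C"
  have Csub: "C \<subseteq> tor_pts" unfolding C_def tor_complement_def by auto
  have topX: "topspace X = C" unfolding X_def using Csub by (auto simp: topspace_tor)
  define S where "S = {y\<in>C. flip_equiv E w (tor_orient E y)}"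
  define R where "R = (\<Union>w'\<in>flip_class E w. tor_q ` order_polytope (poset_of w'))"
  have loc: "\<exists>U. openin tor_top U \<and> y \<in> U \<and> (\<forall>y'\<in>U \<inter> C. flip_equiv E (tor_orient E y) (tor_orient E y'))"
    if "y \<in> C" for y using local_equiv[OF sg, of y] that unfolding C_def by blast
  have oS: "openin X S"
  proof (rule openin_subopen[THEN iffD2], intro ballI)
    fix y assume y: "y \<in> S"
    obtain U where U: "openin tor_top U" "y \<in> U" "\<forall>y'\<in>U \<inter> C. flip_equiv E (tor_orient E y) (tor_orient E y')"
      using loc[of y] y unfolding S_def by blast
    have "openin X (U \<inter> C)" unfolding X_def openin_subtopology using U(1) by blast
    moreover have "y \<in> U \<inter> C" using y U(2) unfolding S_def by auto
    moreover have "U \<inter> C \<subseteq> S" using U(3) y flip_equiv_trans unfolding S_def by blast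
    ultimately show "\<exists>T. openin X T \<and> y \<in> T \<and> T \<subseteq> S" by blast
  qed
  have oS': "openin X (C - S)"
  proof (rule openin_subopen[THEN iffD2], intro ballI)
    fix y assume y: "y \<in> C - S"
    obtain U where U: "openin tor_top U" "y \<in> U" "\<forall>y'\<in>U \<inter> C. flip_equiv E (tor_orient E y) (tor_orient E y')"
      using loc[of y] y by blast
    have "openin X (U \<inter> C)" unfolding X_def openin_subtopology using U(1) by blast
    moreover have "y \<in> U \<inter> C" using y U(2) by auto
    moreover have "U \<inter> C \<subseteq> C - S"
    proof
      fix y' assume y': "y' \<in> U \<inter> C"
      show "y' \<in> C - S"
      proof
        show "y' \<in> C" using y' by blast
        show "y' \<notin> S"
        proof
          assume "y' \<in> S"
          then have "flip_equiv E w (tor_orient E y')" unfolding S_def by blast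
          moreover have "flip_equiv E (tor_orient E y') (tor_orient E y)"
            using U(3) y' flip_equiv_sym by blast
          ultimately have "flip_equiv E w (tor_orient E y)" by (rule flip_equiv_trans)
          then show False using y unfolding S_def by blast
        qed
      qed
    qed
    ultimately show "\<exists>T. openin X T \<and> y \<in> T \<and> T \<subseteq> C - S" by blast
  qed
  have chS: "toric_chamber E w \<subseteq> S"
  proof
    fix z assume "z \<in> toric_chamber E w"
    then obtain x where x: "x \<in> C" "tor_orient E x \<in> flip_class E w" "z \<in> connected_component_of_set X x"
      unfolding toric_chamber_def C_def X_def by blast
    have xS: "x \<in> S" using x unfolding S_def flip_class_def by auto
    let ?K = "connected_component_of_set X x"
    have "?K \<subseteq> S"
    proof (rule ccontr)
      assume nK: "\<not> ?K \<subseteq> S"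
      have cK: "connectedin X ?K" by (rule connectedin_connected_component_of)
      have KC: "?K \<subseteq> C" using connected_component_of_subset_topspace[of X x] topX by simp
      have xK: "x \<in> ?K" using connected_component_of_refl[of X x] x(1) topX by simp
      have "?K \<subseteq> S \<union> (C - S)" using KC by blast
      moreover have "S \<inter> (C - S) \<inter> ?K = {}" by blast
      moreover have "S \<inter> ?K \<noteq> {}" using xK xS by blast
      moreover have "(C - S) \<inter> ?K \<noteq> {}" using nK KC by blast
      ultimately show False using connectedinD[OF cK oS oS'] by blast
    qed
    then show "z \<in> S" using x(3) by blast
  qed
  have SR: "S \<subseteq> R"
  proof
    fix y assume y: "y \<in> S"
    have yp: "y \<in> tor_pts" using y Csub unfolding S_def by blast
    have cl: "tor_orient E y \<in> flip_class E w" using y unfolding S_def flip_class_def by blast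
    have "y \<in> tor_q ` order_polytope (poset_of (tor_orient E y))"
      using poly_mem[OF yp, of E] tor_q_id[OF yp] by (metis image_eqI)
    then show "y \<in> R" unfolding R_def using cl by blast
  qed
  have closedR: "closedin tor_top R"
  proof -
    have Rsub: "R \<subseteq> tor_pts" unfolding R_def using tor_q_in by blast
    have "closed (tor_q -` R)"
      unfolding R_def vimage_UN
    proof (rule closed_UN)
      show "finite (flip_class E w)" by (rule finite)
      show "\<forall>w'\<in>flip_class E w. closed (tor_q -` tor_q ` order_polytope (poset_of w'))"
      proof
        fix w' :: "('a \<times> 'a) set"
        show "closed (tor_q -` tor_q ` order_polytope (poset_of w'))"
          by (rule closed_preim_img[OF closed_order_polytope]) (auto simp: order_polytope_def)
      qed
    qed
    moreover have "tor_q -` (tor_pts - R) = - (tor_q -` R)" using tor_q_in by blast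
    ultimately have "openin tor_top (tor_pts - R)" unfolding openin_tor
      by (simp add: open_Compl)
    then show ?thesis unfolding closedin_def topspace_tor using Rsub by simp
  qed
  have "tor_top closure_of toric_chamber E w \<subseteq> R"
    by (rule closure_of_minimal[OF _ closedR]) (use chS SR in blast)
  moreover have "R \<subseteq> tor_top closure_of toric_chamber E w"
  proof
    fix p assume "p \<in> R"
    then obtain w' y where w': "w' \<in> flip_class E w" and y: "y \<in> order_polytope (poset_of w')"
      and p: "p = tor_q y" unfolding R_def by blast
    have w'A: "w' \<in> Acyc E" using w' unfolding flip_class_def flip_equiv_def by blast
    then have ori: "is_orientation E w'" and ac: "acyclic w'" by (auto simp: Acyc_def)
    have o1: "\<And>i j. (i,j) \<in> w' \<Longrightarrow> {i,j} \<in> E" and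
      o2: "\<And>i j. {i,j} \<in> E \<Longrightarrow> i \<noteq> j \<Longrightarrow> ((i,j) \<in> w' \<longleftrightarrow> (j,i) \<notin> w')"
      using ori unfolding is_orientation_def by blast+
    obtain f where f: "\<And>i j. (i,j) \<in> w' \<Longrightarrow> f i < (f j::real)" "\<And>i. 0 \<le> f i \<and> f i < 1"
      using acyclic_height[OF ac] by blast
    have y01: "0 \<le> y i \<and> y i \<le> 1" for i using y unfolding order_polytope_def by blast
    have ymono: "y i \<le> y j" if "(i,j) \<in> w'" for i j
      using y that unfolding order_polytope_def poset_of_def by blast
    define g where "g t = (\<lambda>i. (1 - t) * y i + t * f i)" for t :: real
    have gmono: "g t i < g t j" if "(i,j) \<in> w'" "0 < t" "t \<le> 1" for i j t
    proof -
      have "(1 - t) * y i \<le> (1 - t) * y j" using ymono[OF that(1)] that(3) by (simp add: mult_left_mono)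
      moreover have "t * f i < t * f j" using f(1)[OF that(1)] that(2) by simp
      ultimately show ?thesis unfolding g_def by linarith
    qed
    have gch: "g t \<in> toric_chamber E w" if t: "0 < t" "t \<le> 1" for t
    proof -
      have gp: "g t \<in> tor_pts" unfolding tor_pts_def
      proof (intro CollectI allI conjI)
        fix i
        have "0 \<le> (1 - t) * y i" using y01[of i] t by simp
        moreover have "0 \<le> t * f i" using f(2)[of i] t by simp
        ultimately show "0 \<le> g t i" unfolding g_def by simp
        have "(1 - t) * y i \<le> (1 - t) * 1" using y01[of i] t by (intro mult_left_mono) auto
        moreover have "t * f i < t * 1" using f(2)[of i] t by (intro mult_strict_left_mono) auto
        ultimately show "g t i < 1" unfolding g_def by simp
      qed
      have gC: "g t \<in> C" unfolding C_def compl_iff[OF sg]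
      proof (intro conjI gp allI impI)
        fix i j assume e: "{i,j} \<in> E" "i \<noteq> j"
        then have "(i,j) \<in> w' \<or> (j,i) \<in> w'" using o2 by blast
        then show "g t i \<noteq> g t j" using gmono[OF _ t] by (metis less_irrefl)
      qed
      have go: "tor_orient E (g t) = w'"
      proof (rule set_eqI)
        fix q :: "'a \<times> 'a"
        obtain a b where q: "q = (a,b)" by (cases q)
        have "(a,b) \<in> tor_orient E (g t) \<longleftrightarrow> (a,b) \<in> w'"
        proof
          assume "(a,b) \<in> tor_orient E (g t)"
          then have ab: "{a,b} \<in> E" "g t a < g t b" by (auto simp: tor_orient_def)
          have "a \<noteq> b" by (rule sg_neq[OF sg ab(1)])
          then have "(a,b) \<in> w' \<or> (b,a) \<in> w'" using o2[OF ab(1)] by blast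
          then show "(a,b) \<in> w'" using gmono[OF _ t, of b a] ab(2) by auto
        next
          assume "(a,b) \<in> w'"
          then show "(a,b) \<in> tor_orient E (g t)" using o1 gmono[OF _ t] by (auto simp: tor_orient_def)
        qed
        then show "q \<in> tor_orient E (g t) \<longleftrightarrow> q \<in> w'" using q by simp
      qed
      have "g t \<in> connected_component_of_set X (g t)"
        using connected_component_of_refl[of X "g t"] gC topX by simp
      then show ?thesis unfolding toric_chamber_def using gC go w' unfolding C_def X_def by blast
    qed
    have cg: "continuous_on UNIV g" unfolding g_def
      by (intro continuous_on_coordinatewise_then_product continuous_intros)
    have g0: "g 0 = y" unfolding g_def by simp
    show "p \<in> tor_top closure_of toric_chamber E w"
      unfolding in_closure_of
    proof (intro conjI allI impI)
      show "p \<in> topspace tor_top" using p tor_q_in topspace_tor by metis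
      fix T assume T: "p \<in> T \<and> openin tor_top T"
      then have oT: "open (tor_q -` T)" unfolding openin_tor by blast
      have "open (g -` (tor_q -` T))" by (rule open_vim[OF cg oT])
      moreover have "0 \<in> g -` (tor_q -` T)" using T p g0 by simp
      ultimately obtain e where e: "e > 0" "ball 0 e \<subseteq> g -` (tor_q -` T)"
        unfolding open_contains_ball by blast
      define t where "t = min (e/2) 1"
      have t: "0 < t" "t \<le> 1" unfolding t_def using e(1) by auto
      have "t \<in> ball 0 e" unfolding t_def using e(1) by (auto simp: dist_real_def)
      then have "tor_q (g t) \<in> T" using e(2) by blast
      moreover have "tor_q (g t) = g t"
        using gch[OF t] chS Csub unfolding S_def by (intro tor_q_id) blast
      ultimately show "\<exists>y. y \<in> toric_chamber E w \<and> y \<in> T" using gch[OF t] by metis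
    qed
  qed
  ultimately show ?thesis unfolding R_def by blast
qed

end
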